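(* Let $1\le d<n$, let $\underline i_{\max,n-1}:=(n-d)(n-d+1)\cdots(n-1)$ and $\underline i_{\max}:=(n-d+1)(n-d+2)\cdots n$, and let $M=\{\underline i\in I(d,n)\mid \ell(\underline i)=\ell(\underline i_{\max,n-1})\}$. Then: (i) $\underline i_{\max,n-1}\ge_{lex}\underline j$ for all $\underline j\in M$. (ii) The interval $\{\underline j\in I(d,n)\mid \underline i_{\max,n-1}\le_{lex}\underline j\le_{lex}\underline i_{\max}\}$ with respect to the lexicographic order equals the interval $[\underline i_{\max,n-1},\underline i_{\max}]$ with respect to the Bruhat order, it is totally ordered with respect to the Bruhat order, and its elements are exactly the rows $(n-d)(n-d+1)\cdots(n-d+k-1)(n-d+k+1)\cdots n$ for $k=0,1,\dots,d$ (obtained from $\underline i_{\max}$ by lowering its first $k$ entries by one), which are the first $d+1$ elements (from the top) of the leftmost maximal chain $\mathfrak C_{\mathrm{left}}$.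
   Context: $I(d,n)$ is the set of $d$-element subsets of $\{1,\dots,n\}$ written as increasing sequences $i_1\cdots i_d$; the Bruhat order is $\underline i\le\underline j$ iff $i_k\le j_k$ for all $k$; $\le_{lex}$ is the lexicographic order on such sequences; $\ell(\underline i)=\sum_h(i_h-h)$. $\mathfrak C_{\mathrm{left}}$ is the maximal chain of $I(d,n)$ which is largest in the lexicographic order on concatenated strings $\underline i_r\cdots\underline i_0$; it is obtained from $\underline i_{\max}$ by lowering successively the first, second, ..., $d$-th entry by one, then again the first, second, ..., and so on. *)

theory Defs
  imports Main
begin

text \<open>Elements of I(d,n): strictly increasing lists of length d with entries in {1..n}.
  Entries are 0-indexed in the list, so position h (0-based) is i_(h+1).\<close>
definition Idn :: "nat \<Rightarrow> nat \<Rightarrow> nat list set" where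
  "Idn d n = {xs. length xs = d \<and> sorted_wrt (<) xs \<and> set xs \<subseteq> {1..n}}"

definition bruhat_le :: "nat list \<Rightarrow> nat list \<Rightarrow> bool" where
  "bruhat_le xs ys \<longleftrightarrow> length xs = length ys \<and> (\<forall>k<length xs. xs ! k \<le> ys ! k)"

definition bruhat_less :: "nat list \<Rightarrow> nat list \<Rightarrow> bool" where
  "bruhat_less xs ys \<longleftrightarrow> bruhat_le xs ys \<and> xs \<noteq> ys"

definition lex_le :: "nat list \<Rightarrow> nat list \<Rightarrow> bool" where
  "lex_le xs ys \<longleftrightarrow> xs = ys \<or> (xs, ys) \<in> lexord {(a, b). a < b}"

definition ell :: "nat list \<Rightarrow> nat" where
  "ell xs = (\<Sum>h<length xs. xs ! h - (h + 1))"

definition imax :: "nat \<Rightarrow> nat \<Rightarrow> nat list" where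
  "imax d n = [n - d + 1 ..< n + 1]"

definition imin :: "nat \<Rightarrow> nat list" where
  "imin d = [1 ..< d + 1]"

definition imax_n1 :: "nat \<Rightarrow> nat \<Rightarrow> nat list" where
  "imax_n1 d n = [n - d ..< n]"

definition row :: "nat \<Rightarrow> nat \<Rightarrow> nat \<Rightarrow> nat list" where
  "row d n k = [n - d ..< n - d + k] @ [n - d + k + 1 ..< n + 1]"

definition bruhat_covers :: "nat \<Rightarrow> nat \<Rightarrow> nat list \<Rightarrow> nat list \<Rightarrow> bool" where
  "bruhat_covers d n a b \<longleftrightarrow> a \<in> Idn d n \<and> b \<in> Idn d n \<and> bruhat_less a b \<and>
     \<not> (\<exists>c \<in> Idn d n. bruhat_less a c \<and> bruhat_less c b)"

definition max_chain :: "nat \<Rightarrow> nat \<Rightarrow> nat list list \<Rightarrow> bool" where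
  "max_chain d n L \<longleftrightarrow> L \<noteq> [] \<and> hd L = imax d n \<and> last L = imin d \<and>
     (\<forall>t. Suc t < length L \<longrightarrow> bruhat_covers d n (L ! Suc t) (L ! t))"

definition is_C_left :: "nat \<Rightarrow> nat \<Rightarrow> nat list list \<Rightarrow> bool" where
  "is_C_left d n L \<longleftrightarrow> max_chain d n L \<and>
     (\<forall>L'. max_chain d n L' \<longrightarrow> lex_le (concat L') (concat L))"

end

theory Submission
  imports Defs "HOL-Library.List_Lexorder"
begin

lemma lex_le_iff: "lex_le xs ys \<longleftrightarrow> xs \<le> ys"
  by (auto simp: lex_le_def list_le_def list_less_def)

lemma sorted_gap:
  assumes "sorted_wrt (<) (xs::nat list)" "i \<le> j" "j < length xs"
  shows "xs!i + (j-i) \<le> xs!j"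
  using assms(2,3)
proof (induction j)
  case 0 then show ?case by simp
next
  case (Suc j)
  show ?case
  proof (cases "i = Suc j")
    case False
    then have "xs!i + (j-i) \<le> xs!j" using Suc by auto
    moreover have "xs!j < xs!Suc j" using assms(1) Suc.prems by (simp add: sorted_wrt_iff_nth_less)
    ultimately show ?thesis using False Suc.prems by linarith
  qed simp
qed

lemma Idn_iff: "x \<in> Idn d n \<longleftrightarrow> length x = d \<and> (\<forall>i j. i < j \<longrightarrow> j < d \<longrightarrow> x!i < x!j)
   \<and> (\<forall>h<d. 1 \<le> x!h \<and> x!h \<le> n)"
proof -
  have "set x \<subseteq> {1..n} \<longleftrightarrow> (\<forall>h<length x. 1 \<le> x!h \<and> x!h \<le> n)"
    apply (rule iffI)
     apply (metis atLeastAtMost_iff nth_mem subsetD)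
    by (auto simp: in_set_conv_nth)
  then show ?thesis unfolding Idn_def sorted_wrt_iff_nth_less mem_Collect_eq by blast
qed

lemma Idn_bounds:
  assumes "x \<in> Idn d n" "h < d"
  shows "h + 1 \<le> x!h" "x!h + d \<le> n + h + 1"
proof -
  have s: "sorted_wrt (<) x" and l: "length x = d" and b: "\<forall>h<d. 1 \<le> x!h \<and> x!h \<le> n"
    using assms(1) Idn_iff[of x d n] by (auto simp: Idn_def)
  have "x!0 + (h - 0) \<le> x!h" using sorted_gap[OF s, of 0 h] assms l by simp
  then show "h + 1 \<le> x!h" using b assms by force
  have "x!h + (d - 1 - h) \<le> x!(d-1)" using sorted_gap[OF s, of h "d-1"] assms l by simp
  moreover have "x!(d-1) \<le> n" using b assms by simp
  ultimately show "x!h + d \<le> n + h + 1" using assms by linarith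
qed

lemma row_len: "m \<le> d \<Longrightarrow> d \<le> n \<Longrightarrow> length (row d n m) = d"
  by (simp add: row_def, linarith)

lemma row_nth: "m \<le> d \<Longrightarrow> d \<le> n \<Longrightarrow> h < d \<Longrightarrow>
   row d n m ! h = (if h < m then n - d + h else n - d + h + 1)"
  by (auto simp: row_def nth_append)

lemma row_Idn: assumes "m \<le> d" "d < n" shows "row d n m \<in> Idn d n"
  using assms unfolding Idn_iff by (auto simp: row_len row_nth)

lemma imax_row: "imax d n = row d n 0"
  by (simp add: imax_def row_def)

lemma imax_n1_row: "d \<le> n \<Longrightarrow> imax_n1 d n = row d n d"
  by (simp add: imax_n1_def row_def)

lemma imin_Idn: "d \<le> n \<Longrightarrow> imin d \<in> Idn d n"
  by (auto simp: Idn_iff imin_def simp del: upt_Suc)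

lemma bruhat_rows: "m' \<le> m \<Longrightarrow> m \<le> d \<Longrightarrow> d \<le> n \<Longrightarrow> bruhat_le (row d n m) (row d n m')"
  by (auto simp: bruhat_le_def row_len row_nth)

lemma row_inj: "m \<le> d \<Longrightarrow> m' \<le> d \<Longrightarrow> d \<le> n \<Longrightarrow> row d n m = row d n m' \<Longrightarrow> m = m'"
proof (rule ccontr)
  assume a: "m \<le> d" "m' \<le> d" "d \<le> n" "row d n m = row d n m'" "m \<noteq> m'"
  show False
  proof (cases "m < m'")
    case True
    then have "row d n m ! m \<noteq> row d n m' ! m" using a(1-3) \<open>m<m'\<close> by (auto simp: row_nth)
    then show False using a by simp
  next
    case False
    then have "m' < m" using a by simp
    then have "row d n m ! m' \<noteq> row d n m' ! m'" using a(1-3) \<open>m'<m\<close> by (auto simp: row_nth)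
    then show False using a by simp
  qed
qed

lemma bruhat_imp_lex: "bruhat_le a b \<Longrightarrow> a \<le> b"
proof -
  assume "bruhat_le a b"
  then have "length a = length b" "\<forall>k<length a. a!k \<le> b!k" by (auto simp: bruhat_le_def)
  then show "a \<le> b"
  proof (induction a b rule: list_induct2)
    case Nil then show ?case by simp
  next
    case (Cons x xs y ys)
    then have "x \<le> y" by force
    moreover have "xs \<le> ys" using Cons by force
    ultimately show ?case by (auto simp: order.order_iff_strict)
  qed
qed

lemma lex_first: "a \<le> b \<Longrightarrow> a \<noteq> [] \<Longrightarrow> b \<noteq> [] \<Longrightarrow> (a::nat list)!0 \<le> b!0"
  by (cases a; cases b) auto

lemma bruhat_antisym: "bruhat_le a b \<Longrightarrow> bruhat_le b a \<Longrightarrow> a = b"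
  unfolding bruhat_le_def by (auto intro: nth_equalityI simp: order_antisym)

lemma bruhat_trans: "bruhat_le a b \<Longrightarrow> bruhat_le b c \<Longrightarrow> bruhat_le a c"
  unfolding bruhat_le_def by (metis order_trans)

lemma bruhat_less_trans: "bruhat_less a b \<Longrightarrow> bruhat_less b c \<Longrightarrow> bruhat_less a c"
  unfolding bruhat_less_def using bruhat_trans bruhat_antisym by blast

lemma row_char:
  assumes x: "x \<in> Idn d n" and dn: "d < n" and d1: "1 \<le> d" and x0: "n - d \<le> x!0"
  shows "\<exists>m\<le>d. x = row d n m"
proof -
  have s: "sorted_wrt (<) x" and l: "length x = d" using x by (auto simp: Idn_def)
  have lo: "n - d + h \<le> x!h" if "h < d" for h
    using sorted_gap[OF s, of 0 h] that l x0 by simp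
  have hi: "x!h \<le> n - d + h + 1" if "h < d" for h
    using Idn_bounds(2)[OF x that] dn by linarith
  define P where "P h \<longleftrightarrow> h < d \<and> x!h = n - d + h + 1" for h
  define m where "m = (if \<exists>h. P h then LEAST h. P h else d)"
  have md: "m \<le> d"
  proof (cases "\<exists>h. P h")
    case True
    then obtain h where "P h" by blast
    then have "(LEAST h. P h) \<le> h" by (rule Least_le)
    moreover have "h < d" using \<open>P h\<close> by (simp add: P_def)
    ultimately show ?thesis using True unfolding m_def by simp
  qed (simp add: m_def)
  have below: "x!h = n - d + h" if "h < m" for h
  proof -
    have "\<not> P h"
    proof (cases "\<exists>h. P h")
      case True then show ?thesis using that m_def not_less_Least by auto
    next
      case False then show ?thesis by blast
    qed
    moreover have "h < d" using that md by simp
    ultimately show ?thesis using lo[of h] hi[of h] unfolding P_def by linarith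
  qed
  have above: "x!h = n - d + h + 1" if "m \<le> h" "h < d" for h
  proof -
    have ex: "\<exists>h. P h"
    proof (rule ccontr)
      assume "\<not> (\<exists>h. P h)" then have "m = d" by (simp add: m_def)
      then show False using that by simp
    qed
    then have "P m" unfolding m_def by (simp add: LeastI_ex)
    then have "x!m = n - d + m + 1" "m < d" by (auto simp: P_def)
    moreover have "x!m + (h - m) \<le> x!h" using sorted_gap[OF s, of m h] that l by simp
    ultimately show ?thesis using hi[OF that(2)] that by linarith
  qed
  have "x = row d n m"
    by (rule nth_equalityI) (auto simp: l row_len row_nth md dn less_imp_le below above)
  then show ?thesis using md by blast
qed

lemma covers_step:
  assumes a: "a \<in> Idn d n" and b: "b \<in> Idn d n" and p: "p < d" and ab: "a!p + 1 = b!p"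
    and eq: "\<forall>h<d. h \<noteq> p \<longrightarrow> a!h = b!h"
  shows "bruhat_covers d n a b"
proof -
  have la: "length a = d" and lb: "length b = d" using a b by (auto simp: Idn_def)
  have "bruhat_less a b" unfolding bruhat_less_def bruhat_le_def using la lb eq ab p
    by (metis le_add1 order_refl n_not_Suc_n add.commute plus_1_eq_Suc)
  moreover have "\<not> (bruhat_less a c \<and> bruhat_less c b)" if c: "c \<in> Idn d n" for c
  proof
    assume h: "bruhat_less a c \<and> bruhat_less c b"
    then have lc: "length c = d" and ac: "\<forall>k<d. a!k \<le> c!k" and cb: "\<forall>k<d. c!k \<le> b!k"
      and ne1: "a \<noteq> c" and ne2: "c \<noteq> b"
      using la by (auto simp: bruhat_less_def bruhat_le_def)
    have ceq: "c!h = a!h" if "h < d" "h \<noteq> p" for h using ac cb eq that by (metis order_antisym)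
    show False
    proof (cases "c!p = a!p")
      case True
      then have "c = a" using ceq lc la by (metis nth_equalityI)
      then show False using ne1 by simp
    next
      case False
      then have "c!p = b!p" using ac cb ab p by (metis Suc_eq_plus1 le_antisym not_less_eq_eq order_le_less)
      then have "c = b" using ceq lc lb eq by (metis nth_equalityI)
      then show False using ne2 by simp
    qed
  qed
  ultimately show ?thesis using a b by (auto simp: bruhat_covers_def)
qed

definition chain_from :: "nat \<Rightarrow> nat \<Rightarrow> nat list \<Rightarrow> nat list list \<Rightarrow> bool" where
  "chain_from d n x L \<longleftrightarrow> L \<noteq> [] \<and> hd L = x \<and> last L = imin d \<and>
     (\<forall>t. Suc t < length L \<longrightarrow> bruhat_covers d n (L ! Suc t) (L ! t))"

lemma chain_exists:
  assumes "x \<in> Idn d n"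
  shows "\<exists>L. chain_from d n x L"
  using assms
proof (induction "\<Sum>h<length x. x!h" arbitrary: x rule: less_induct)
  case less
  have l: "length x = d" using less.prems by (simp add: Idn_def)
  show ?case
  proof (cases "x = imin d")
    case True
    then show ?thesis by (rule_tac x="[x]" in exI) (simp add: chain_from_def)
  next
    case False
    have li: "length (imin d) = d" by (simp add: imin_def)
    have ii: "imin d ! h = h + 1" if "h < d" for h using that by (simp add: imin_def del: upt_Suc)
    have "\<exists>p<d. x!p \<noteq> p + 1"
    proof (rule ccontr)
      assume "\<not> ?thesis"
      then have "x = imin d" using l li ii by (metis nth_equalityI)
      then show False using False by simp
    qed
    define p where "p = (LEAST p. p < d \<and> x!p \<noteq> p + 1)"
    have pd: "p < d" and xp: "x!p \<noteq> p + 1"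
      using LeastI_ex[OF \<open>\<exists>p<d. x!p \<noteq> p + 1\<close>] by (auto simp: p_def)
    have bef: "x!h = h + 1" if "h < p" for h
      using not_less_Least[of h "\<lambda>p. p < d \<and> x!p \<noteq> p + 1"] that pd by (auto simp: p_def)
    have xp2: "p + 2 \<le> x!p" using Idn_bounds(1)[OF less.prems pd] xp by linarith
    define y where "y = x[p := x!p - 1]"
    have ly: "length y = d" using l by (simp add: y_def)
    have ynth: "y!h = (if h = p then x!p - 1 else x!h)" if "h < d" for h
      using that l by (simp add: y_def)
    have xI: "length x = d \<and> (\<forall>i j. i < j \<longrightarrow> j < d \<longrightarrow> x!i < x!j) \<and> (\<forall>h<d. 1 \<le> x!h \<and> x!h \<le> n)"
      using less.prems Idn_iff by blast
    have yI: "y \<in> Idn d n"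
      unfolding Idn_iff
    proof (intro conjI allI impI)
      show "length y = d" by (rule ly)
    next
      fix i j assume ij: "i < j" "j < d"
      show "y!i < y!j"
      proof (cases "j = p")
        case True
        then have "x!i = i + 1" using bef ij by simp
        then show ?thesis using ij True xp2 ynth by simp
      next
        case False
        then show ?thesis using ij xI ynth by (cases "i = p") fastforce+
      qed
    next
      fix h assume "h < d"
      then show "1 \<le> y!h" "y!h \<le> n" using xI ynth xp2 by (cases "h = p"; force)+
    qed
    have "(\<Sum>h<length y. y!h) < (\<Sum>h<length x. x!h)"
      unfolding ly l
      by (rule sum_strict_mono_ex1) (use ynth pd xp2 in auto)
    then obtain L where L: "chain_from d n y L" using less.hyps yI by (metis ly l)
    have cov: "bruhat_covers d n y x"
      by (rule covers_step[OF yI less.prems pd]) (use ynth pd xp2 in auto)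
    show ?thesis
    proof (rule exI[of _ "x # L"])
      show "chain_from d n x (x # L)"
        unfolding chain_from_def
      proof (intro conjI allI impI)
        show "last (x # L) = imin d" using L by (simp add: chain_from_def)
      next
        fix t assume t: "Suc t < length (x # L)"
        show "bruhat_covers d n ((x # L) ! Suc t) ((x # L) ! t)"
        proof (cases t)
          case 0 then show ?thesis using L cov by (simp add: chain_from_def hd_conv_nth[symmetric])
        next
          case (Suc t') then show ?thesis using L t by (simp add: chain_from_def)
        qed
      qed simp_all
    qed
  qed
qed

lemma max_chain_iff: "max_chain d n L \<longleftrightarrow> chain_from d n (imax d n) L"
  by (simp add: max_chain_def chain_from_def)

lemma chain_less:
  assumes "max_chain d n L" "i < j" "j < length L"
  shows "bruhat_less (L!j) (L!i)"
  using assms(2,3)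
proof (induction j)
  case 0 then show ?case by simp
next
  case (Suc j)
  have c: "bruhat_less (L!Suc j) (L!j)" using assms(1) Suc.prems
    by (auto simp: max_chain_def bruhat_covers_def)
  show ?case
  proof (cases "i = j")
    case True then show ?thesis using c by simp
  next
    case False then show ?thesis using Suc c bruhat_less_trans by simp
  qed
qed

lemma chain_in_Idn:
  assumes "max_chain d n L" "d < n"
  shows "set L \<subseteq> Idn d n"
proof
  fix a assume "a \<in> set L"
  then obtain t where t: "t < length L" "a = L!t" by (auto simp: in_set_conv_nth)
  show "a \<in> Idn d n"
  proof (cases t)
    case 0
    then have "a = imax d n" using assms(1) t by (simp add: max_chain_def hd_conv_nth[symmetric])
    then show ?thesis using row_Idn[of 0 d n] assms(2) by (simp add: imax_row)
  next
    case (Suc t')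
    then show ?thesis using assms(1) t by (auto simp: max_chain_def bruhat_covers_def)
  qed
qed

lemma chain_distinct:
  assumes "max_chain d n L"
  shows "distinct L"
  unfolding distinct_conv_nth
proof (intro allI impI)
  fix i j assume h: "i < length L" "j < length L" "i \<noteq> j"
  show "L!i \<noteq> L!j"
  proof (cases "i < j")
    case True then show ?thesis using chain_less[OF assms True h(2)] by (auto simp: bruhat_less_def)
  next
    case False then have "j < i" using h by simp
    then show ?thesis using chain_less[OF assms _ h(1)] by (auto simp: bruhat_less_def)
  qed
qed

lemma Idn_finite: "finite (Idn d n)"
  by (rule finite_subset[OF _ finite_lists_length_eq[of "{1..n}" d]]) (auto simp: Idn_def)

lemma C_left_exists:
  assumes "d < n"
  shows "\<exists>L. is_C_left d n L"
proof -
  let ?C = "{L. max_chain d n L}"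
  have "?C \<subseteq> {xs. set xs \<subseteq> Idn d n \<and> distinct xs}"
    using chain_in_Idn chain_distinct assms by blast
  then have fin: "finite ?C" using finite_subset finite_subset_distinct[OF Idn_finite] by blast
  have "imax d n \<in> Idn d n" using row_Idn[of 0 d n] assms by (simp add: imax_row)
  then obtain L0 where "chain_from d n (imax d n) L0" using chain_exists by blast
  then have ne: "?C \<noteq> {}" by (auto simp: max_chain_iff)
  have "Max (concat ` ?C) \<in> concat ` ?C" using fin ne by (intro Max_in) auto
  then obtain L where L: "max_chain d n L" "concat L = Max (concat ` ?C)" by auto
  have "\<forall>L'. max_chain d n L' \<longrightarrow> lex_le (concat L') (concat L)"
    using fin L by (auto simp: lex_le_iff)
  then show ?thesis using L unfolding is_C_left_def by blast
qed

lemma app_less: "length c = length r \<Longrightarrow> (c::nat list) < r \<Longrightarrow> c @ R < r @ R'"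
  by (induction c r rule: list_induct2) auto

lemma pre_less: "(x::nat list) < y \<Longrightarrow> P @ x < P @ y"
  by (induction P) auto

lemma S_char:
  assumes "1 \<le> d" "d < n"
  shows "{j \<in> Idn d n. n - d \<le> j!0} = row d n ` {0..d}"
proof
  show "{j \<in> Idn d n. n - d \<le> j!0} \<subseteq> row d n ` {0..d}"
    using row_char assms by fastforce
  show "row d n ` {0..d} \<subseteq> {j \<in> Idn d n. n - d \<le> j!0}"
    using assms row_Idn by (auto simp: row_nth)
qed

lemma lex_lower:
  assumes "j \<in> Idn d n" "1 \<le> d" "d < n" "imax_n1 d n \<le> j"
  shows "n - d \<le> j!0"
proof -
  have "imax_n1 d n ! 0 \<le> j!0"
    by (rule lex_first[OF assms(4)]) (use assms in \<open>auto simp: imax_n1_def Idn_def\<close>)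
  then show ?thesis using assms by (simp add: imax_n1_def)
qed

lemma le_imax:
  assumes "j \<in> Idn d n" "d < n"
  shows "bruhat_le j (imax d n)"
proof -
  have l: "length j = d" using assms(1) by (simp add: Idn_def)
  have "j!h \<le> row d n 0 ! h" if "h<d" for h
    using Idn_bounds(2)[OF assms(1) that] row_nth[of 0 d n h] that assms(2) by simp
  then show ?thesis using l row_len[of 0 d n] assms(2) by (simp add: bruhat_le_def imax_row)
qed

lemma ell_rows:
  assumes "m < d" "d < n"
  shows "ell (row d n d) < ell (row d n m)"
  unfolding ell_def using assms
  apply (simp add: row_len)
  apply (rule sum_strict_mono_ex1)
    apply (auto simp: row_nth)
  done

lemma part1:
  assumes "j \<in> Idn d n" "ell j = ell (imax_n1 d n)" "1 \<le> d" "d < n"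
  shows "j \<le> imax_n1 d n"
proof (rule ccontr)
  assume "\<not> j \<le> imax_n1 d n"
  then have lt: "imax_n1 d n < j" by simp
  then have "n - d \<le> j!0" using lex_lower assms by simp
  then obtain m where m: "m \<le> d" "j = row d n m" using row_char assms by blast
  show False
  proof (cases "m = d")
    case True then show False using lt m assms by (simp add: imax_n1_row)
  next
    case False
    then show False using ell_rows[of m d n] m assms by (simp add: imax_n1_row)
  qed
qed

lemma first_less: "c \<noteq> [] \<Longrightarrow> r \<noteq> [] \<Longrightarrow> (c::nat list)!0 < r!0 \<Longrightarrow> c < r"
  by (cases c; cases r) auto

lemma row_covers:
  assumes "k < d" "d < n"
  shows "bruhat_covers d n (row d n (Suc k)) (row d n k)"
  by (rule covers_step[where p = k]) (use assms row_Idn in \<open>auto simp: row_nth\<close>)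

lemma C_left_prefix:
  assumes C: "is_C_left d n L" and d1: "1 \<le> d" and dn: "d < n"
  shows "k \<le> d \<Longrightarrow> k < length L \<and> L!k = row d n k"
proof (induction k)
  case 0
  then show ?case using C by (auto simp: is_C_left_def max_chain_def hd_conv_nth[symmetric] imax_row)
next
  case (Suc k)
  then have kd: "k < d" and kL: "k < length L" and Lk: "L!k = row d n k" by auto
  have mc: "max_chain d n L" using C by (simp add: is_C_left_def)
  have "Suc k < length L"
  proof (rule ccontr)
    assume "\<not> Suc k < length L"
    then have "k = length L - 1" using kL by simp
    moreover have "L \<noteq> []" using kL by auto
    ultimately have "L!k = last L" by (simp add: last_conv_nth)
    then have "L!k = imin d" using mc by (simp add: max_chain_def)
    then have "row d n k ! (d-1) = imin d ! (d-1)" using Lk by simp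
    then show False using kd dn d1 by (simp add: row_nth imin_def del: upt_Suc split: if_split_asm; linarith)
  qed
  define c where "c = L!Suc k"
  have cov: "bruhat_covers d n c (row d n k)" using mc \<open>Suc k < length L\<close> Lk
    unfolding max_chain_def c_def by metis
  then have cI: "c \<in> Idn d n" and cl: "bruhat_less c (row d n k)" by (auto simp: bruhat_covers_def)
  have "c = row d n (Suc k)"
  proof (cases "n - d \<le> c!0")
    case True
    then obtain m where m: "m \<le> d" "c = row d n m" using row_char cI dn d1 by blast
    have "k < m"
    proof (rule ccontr)
      assume "\<not> k < m"
      then have "bruhat_le (row d n k) (row d n m)" using bruhat_rows kd dn by simp
      then show False using cl m bruhat_antisym by (auto simp: bruhat_less_def)
    qed
    show ?thesis
    proof (rule ccontr)
      assume ne: "c \<noteq> row d n (Suc k)"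
      then have "Suc k < m" using \<open>k < m\<close> m by (cases "m = Suc k") auto
      have "bruhat_less c (row d n (Suc k))"
        using m \<open>Suc k < m\<close> bruhat_rows[of "Suc k" m d n] dn ne by (simp add: bruhat_less_def)
      moreover have "bruhat_less (row d n (Suc k)) (row d n k)"
        using row_covers[OF kd dn] by (simp add: bruhat_covers_def)
      moreover have "row d n (Suc k) \<in> Idn d n" using row_Idn kd dn by simp
      ultimately show False using cov by (auto simp: bruhat_covers_def)
    qed
  next
    case False
    have rI: "row d n (Suc k) \<in> Idn d n" using row_Idn kd dn by simp
    obtain L2 where L2: "chain_from d n (row d n (Suc k)) L2" using chain_exists[OF rI] by blast
    define L' where "L' = take (Suc k) L @ L2"
    have lt: "length (take (Suc k) L) = Suc k" using \<open>Suc k < length L\<close> by simp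
    have L2ne: "L2 \<noteq> []" and L2h: "L2!0 = row d n (Suc k)" using L2 by (auto simp: chain_from_def hd_conv_nth[symmetric])
    have "max_chain d n L'"
      unfolding max_chain_def
    proof (intro conjI allI impI)
      show "L' \<noteq> []" using L2ne by (simp add: L'_def)
      show "hd L' = imax d n" using mc \<open>Suc k < length L\<close> by (auto simp: L'_def max_chain_def hd_append)
      show "last L' = imin d" using L2 L2ne by (simp add: L'_def chain_from_def)
    next
      fix t assume t: "Suc t < length L'"
      show "bruhat_covers d n (L' ! Suc t) (L' ! t)"
      proof (cases "t < k")
        case True
        then show ?thesis using mc \<open>Suc k < length L\<close> lt
          by (simp add: L'_def nth_append max_chain_def)
      next
        case False
        show ?thesis
        proof (cases "t = k")
          case True
          then show ?thesis using lt L2h Lk kL row_covers[OF kd dn] by (simp add: L'_def nth_append)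
        next
          case False
          then have tk: "k < t" using \<open>\<not> t < k\<close> by simp
          have "Suc (t - Suc k) < length L2" using t lt tk by (simp add: L'_def)
          then have "bruhat_covers d n (L2 ! Suc (t - Suc k)) (L2 ! (t - Suc k))"
            using L2 by (simp add: chain_from_def)
          moreover have "Suc t - Suc k = Suc (t - Suc k)" using tk by simp
          ultimately show ?thesis using lt tk by (simp add: L'_def nth_append)
        qed
      qed
    qed
    then have le: "concat L' \<le> concat L" using C by (simp add: is_C_left_def lex_le_iff)
    have cne: "c \<noteq> []" and lc: "length c = d" using cI d1 by (auto simp: Idn_def)
    have rne: "row d n (Suc k) \<noteq> []" and lr: "length (row d n (Suc k)) = d"
      using kd dn d1 row_len[of "Suc k" d n] by auto
    have r0: "row d n (Suc k) ! 0 = n - d" using kd dn row_nth[of "Suc k" d n 0] by simp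
    have clt: "c < row d n (Suc k)" using first_less[OF cne rne] False r0 by simp
    have eL: "concat L = concat (take (Suc k) L) @ c @ concat (drop (Suc (Suc k)) L)"
      using \<open>Suc k < length L\<close> c_def
      by (metis append_take_drop_id concat.simps(2) concat_append Cons_nth_drop_Suc)
    have eL2: "concat L2 = row d n (Suc k) @ concat (tl L2)"
      using L2ne L2h by (metis concat.simps(2) hd_Cons_tl hd_conv_nth)
    have "concat L < concat L'"
      unfolding eL L'_def concat_append eL2
      by (rule pre_less, rule app_less) (use lc lr clt in auto)
    then show ?thesis using le by simp
  qed
  then show ?case using \<open>Suc k < length L\<close> c_def by simp
qed

theorem lemma2p7:
  fixes d n :: nat
  assumes "1 \<le> d" and "d < n"
  defines "M \<equiv> {i \<in> Idn d n. ell i = ell (imax_n1 d n)}"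
  defines "J \<equiv> {j \<in> Idn d n. lex_le (imax_n1 d n) j \<and> lex_le j (imax d n)}"
  shows "(\<forall>j \<in> M. lex_le j (imax_n1 d n))
    \<and> J = {j \<in> Idn d n. bruhat_le (imax_n1 d n) j \<and> bruhat_le j (imax d n)}
    \<and> (\<forall>a \<in> J. \<forall>b \<in> J. bruhat_le a b \<or> bruhat_le b a)
    \<and> J = row d n ` {0..d}
    \<and> (\<exists>L. is_C_left d n L)
    \<and> (\<forall>L. is_C_left d n L \<longrightarrow> take (d + 1) L = map (row d n) [0..<d + 1])"
proof -
  have dn: "d \<le> n" using assms(2) by simp
  have p1: "\<forall>j \<in> M. lex_le j (imax_n1 d n)"
    using part1 assms by (auto simp: M_def lex_le_iff)
  have JS: "J = {j \<in> Idn d n. n - d \<le> j!0}"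
  proof (intro set_eqI iffI)
    fix j assume "j \<in> J"
    then show "j \<in> {j \<in> Idn d n. n - d \<le> j!0}"
      using lex_lower assms by (auto simp: J_def lex_le_iff)
  next
    fix j assume "j \<in> {j \<in> Idn d n. n - d \<le> j!0}"
    then obtain m where m: "m \<le> d" "j = row d n m" "j \<in> Idn d n" using row_char assms by blast
    have "bruhat_le (imax_n1 d n) j" using m bruhat_rows[of m d d n] dn by (simp add: imax_n1_row)
    moreover have "bruhat_le j (imax d n)" using le_imax m assms by simp
    ultimately show "j \<in> J" using m by (auto simp: J_def lex_le_iff intro: bruhat_imp_lex)
  qed
  have BS: "{j \<in> Idn d n. bruhat_le (imax_n1 d n) j \<and> bruhat_le j (imax d n)} = {j \<in> Idn d n. n - d \<le> j!0}"
  proof (intro set_eqI iffI)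
    fix j assume j: "j \<in> {j \<in> Idn d n. bruhat_le (imax_n1 d n) j \<and> bruhat_le j (imax d n)}"
    then have "imax_n1 d n \<le> j" using bruhat_imp_lex by auto
    then show "j \<in> {j \<in> Idn d n. n - d \<le> j!0}" using j lex_lower assms by auto
  next
    fix j assume "j \<in> {j \<in> Idn d n. n - d \<le> j!0}"
    then obtain m where m: "m \<le> d" "j = row d n m" "j \<in> Idn d n" using row_char assms by blast
    have "bruhat_le (imax_n1 d n) j" using m bruhat_rows[of m d d n] dn by (simp add: imax_n1_row)
    moreover have "bruhat_le j (imax d n)" using le_imax m assms by simp
    ultimately show "j \<in> {j \<in> Idn d n. bruhat_le (imax_n1 d n) j \<and> bruhat_le j (imax d n)}"
      using m by auto
  qed
  have JR: "J = row d n ` {0..d}" using JS S_char assms by simp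
  have tot: "\<forall>a \<in> J. \<forall>b \<in> J. bruhat_le a b \<or> bruhat_le b a"
  proof (intro ballI)
    fix a b assume "a \<in> J" "b \<in> J"
    then obtain m m' where "m \<le> d" "m' \<le> d" "a = row d n m" "b = row d n m'" using JR by auto
    then show "bruhat_le a b \<or> bruhat_le b a"
      using bruhat_rows[of m m' d n] bruhat_rows[of m' m d n] dn by (cases "m' \<le> m") auto
  qed
  have last: "\<forall>L. is_C_left d n L \<longrightarrow> take (d + 1) L = map (row d n) [0..<d + 1]"
  proof (intro allI impI)
    fix L assume C: "is_C_left d n L"
    have dl: "d < length L" using C_left_prefix[OF C assms(1,2), of d] by simp
    show "take (d + 1) L = map (row d n) [0..<d + 1]"
    proof (rule nth_equalityI)
      show "length (take (d + 1) L) = length (map (row d n) [0..<d + 1])" using dl by simp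
      fix i assume "i < length (take (d + 1) L)"
      then have "i \<le> d" using dl by simp
      then show "take (d + 1) L ! i = map (row d n) [0..<d + 1] ! i"
        using C_left_prefix[OF C assms(1,2), of i] by (simp del: upt_Suc)
    qed
  qed
  show ?thesis using p1 JS BS JR tot last C_left_exists[OF assms(2)] by simp
qed

end
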